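(* Let $r\ge 2$ be an integer and let $H$ be a graph that admits a proper $r$-colouring whose colour classes have sizes $\ell_1\ge \ell_2\ge\dots\ge \ell_r>0$. Let $x\in\left(0,\frac{1}{|V(H)|}\right)$, let $n$ be a positive integer, and set $\delta:=(r-2+x\ell_r)\frac{n}{r-1}$. Then every $n$-vertex graph $G$ with at least $(r-2+x|V(H)|)\frac{n}{r-1}$ vertices of degree at least $\delta$ has fractional hom$_H$-cover number at least $xn$.
   Context: Let $G^H$ denote the set of all graph homomorphisms $h:H\to G$, i.e. maps $h:V(H)\to V(G)$ such that $uv\in E(H)$ implies $h(u)h(v)\in E(G)$. A fractional hom$_H$-cover of $G$ is a function $c:V(G)\to[0,1]$ such that for every homomorphism $h\in G^H$, $\sum_{v\in V(G)} c(v)\,|h^{-1}(v)|\ge 1$; its size is $\sum_{v\in V(G)}c(v)$. The fractional hom$_H$-cover number of $G$ is the minimum size of a fractional hom$_H$-cover of $G$. *)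

theory Defs
  imports Complex_Main "HOL-Library.FuncSet"
begin

definition graph :: "'a set \<Rightarrow> ('a \<Rightarrow> 'a \<Rightarrow> bool) \<Rightarrow> bool" where
  "graph V E \<longleftrightarrow> finite V \<and> (\<forall>u v. E u v \<longrightarrow> u \<in> V \<and> v \<in> V \<and> u \<noteq> v \<and> E v u)"

definition degree :: "'a set \<Rightarrow> ('a \<Rightarrow> 'a \<Rightarrow> bool) \<Rightarrow> 'a \<Rightarrow> nat" where
  "degree V E v = card {w \<in> V. E v w}"

definition homs :: "'b set \<Rightarrow> ('b \<Rightarrow> 'b \<Rightarrow> bool) \<Rightarrow> 'a set \<Rightarrow> ('a \<Rightarrow> 'a \<Rightarrow> bool) \<Rightarrow> ('b \<Rightarrow> 'a) set" where
  "homs VH EH VG EG = {h \<in> VH \<rightarrow>\<^sub>E VG. \<forall>u\<in>VH. \<forall>v\<in>VH. EH u v \<longrightarrow> EG (h u) (h v)}"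

definition frac_hom_cover :: "'b set \<Rightarrow> ('b \<Rightarrow> 'b \<Rightarrow> bool) \<Rightarrow> 'a set \<Rightarrow> ('a \<Rightarrow> 'a \<Rightarrow> bool) \<Rightarrow> ('a \<Rightarrow> real) \<Rightarrow> bool" where
  "frac_hom_cover VH EH VG EG c \<longleftrightarrow>
     (\<forall>v\<in>VG. 0 \<le> c v \<and> c v \<le> 1) \<and>
     (\<forall>h\<in>homs VH EH VG EG. (\<Sum>v\<in>VG. c v * real (card {u \<in> VH. h u = v})) \<ge> 1)"

definition frac_hom_cover_number :: "'b set \<Rightarrow> ('b \<Rightarrow> 'b \<Rightarrow> bool) \<Rightarrow> 'a set \<Rightarrow> ('a \<Rightarrow> 'a \<Rightarrow> bool) \<Rightarrow> real" where
  "frac_hom_cover_number VH EH VG EG = Inf {(\<Sum>v\<in>VG. c v) | c. frac_hom_cover VH EH VG EG c}"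

end

theory Submission
  imports Defs
begin


lemma fiber_sum:
  assumes "finite VG" "finite VH" "h ` VH \<subseteq> VG"
  shows "(\<Sum>v\<in>VG. c v * real (card {u \<in> VH. h u = v})) = (\<Sum>u\<in>VH. (c (h u)::real))"
proof -
  have "(\<Sum>u\<in>VH. c (h u)) = (\<Sum>v\<in>VG. \<Sum>u\<in>{u \<in> VH. h u = v}. c (h u))"
    using sum.group[OF assms(2,1,3), of "\<lambda>u. c (h u)"] by simp
  also have "\<dots> = (\<Sum>v\<in>VG. c v * real (card {u \<in> VH. h u = v}))"
    by (rule sum.cong) auto
  finally show ?thesis by simp
qed

lemma telescope:
  fixes a :: "nat \<Rightarrow> real"
  assumes "a 0 = 0"
  shows "(\<Sum>k=1..m. a k - a (k-1)) = a m"
  by (induction m) (auto simp: assms)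

lemma abel:
  fixes a l :: "nat \<Rightarrow> real"
  assumes "a 0 = 0"
  shows "(\<Sum>k=1..m. (a k - a (k-1)) * (\<Sum>j=k..m. l j)) = (\<Sum>k=1..m. l k * a k)"
proof (induction m)
  case 0 then show ?case by simp
next
  case (Suc m)
  have "(\<Sum>k=1..Suc m. (a k - a (k-1)) * (\<Sum>j=k..Suc m. l j))
      = (\<Sum>k=1..m. (a k - a (k-1)) * (\<Sum>j=k..Suc m. l j)) + (a (Suc m) - a m) * l (Suc m)"
    by simp
  also have "(\<Sum>k=1..m. (a k - a (k-1)) * (\<Sum>j=k..Suc m. l j))
      = (\<Sum>k=1..m. (a k - a (k-1)) * (\<Sum>j=k..m. l j)) + (\<Sum>k=1..m. (a k - a (k-1))) * l (Suc m)"
  proof -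
    have "(a k - a (k-1)) * (\<Sum>j=k..Suc m. l j) = (a k - a (k-1)) * (\<Sum>j=k..m. l j) + (a k - a (k-1)) * l (Suc m)"
      if "k \<in> {1..m}" for k using that by (simp add: algebra_simps)
    then have "(\<Sum>k=1..m. (a k - a (k-1)) * (\<Sum>j=k..Suc m. l j)) = (\<Sum>k=1..m. (a k - a (k-1)) * (\<Sum>j=k..m. l j) + (a k - a (k-1)) * l (Suc m))"
      by (rule sum.cong[OF refl])
    then show ?thesis by (simp add: sum.distrib sum_distrib_right)
  qed
  also have "(\<Sum>k=1..m. (a k - a (k-1))) = a m" by (rule telescope[of a m, OF assms])
  finally have "(\<Sum>k=1..Suc m. (a k - a (k-1)) * (\<Sum>j=k..Suc m. l j)) = (\<Sum>k=1..m. l k * a k) + a m * l (Suc m) + (a (Suc m) - a m) * l (Suc m)"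
    by (simp only: Suc.IH)
  then show ?case by (simp add: left_diff_distrib)
qed

lemma layer_point:
  fixes a :: "nat \<Rightarrow> real"
  assumes "a 0 = 0" "\<forall>k<m. a k \<le> a (Suc k)" "0 \<le> t"
  shows "(\<Sum>k=1..m. (a k - a (k-1)) * (if a k \<le> t then 1 else 0)) \<le> min t (a m)"
  using assms(2)
proof (induction m)
  case 0 then show ?case using assms by simp
next
  case (Suc m)
  then have IH: "(\<Sum>k=1..m. (a k - a (k-1)) * (if a k \<le> t then 1 else 0)) \<le> min t (a m)"
    and mo: "a m \<le> a (Suc m)" by auto
  show ?case using IH mo by (auto simp: min_def split: if_splits)
qed

lemma layer_cake:
  fixes a :: "nat \<Rightarrow> real"
  assumes "finite V" "\<forall>w\<in>V. 0 \<le> c w" "a 0 = 0" "\<forall>k<m. a k \<le> a (Suc k)"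
  shows "(\<Sum>k=1..m. (a k - a (k-1)) * real (card {w\<in>V. a k \<le> c w})) \<le> (\<Sum>w\<in>V. c w)"
proof -
  have c: "real (card {w\<in>V. a k \<le> c w}) = (\<Sum>w\<in>V. if a k \<le> c w then 1 else 0)" for k
    using assms(1) by (simp add: sum.If_cases Int_def)
  have "(\<Sum>k=1..m. (a k - a (k-1)) * real (card {w\<in>V. a k \<le> c w}))
      = (\<Sum>k=1..m. \<Sum>w\<in>V. (a k - a (k-1)) * (if a k \<le> c w then 1 else 0))"
    by (simp add: c sum_distrib_left)
  also have "\<dots> = (\<Sum>w\<in>V. \<Sum>k=1..m. (a k - a (k-1)) * (if a k \<le> c w then 1 else 0))"
    by (rule sum.swap)
  also have "\<dots> \<le> (\<Sum>w\<in>V. c w)"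
    by (rule sum_mono) (use layer_point[OF assms(3,4)] assms(2) in fastforce)
  finally show ?thesis .
qed

lemma card_common_nbrs:
  assumes "graph VG EG" "T \<subseteq> VG" "\<forall>j\<in>{1..k}. v j \<in> VG \<and> \<delta> \<le> real (degree VG EG (v j))"
  shows "real (card {w\<in>T. \<forall>j\<in>{1..k}. EG (v j) w}) \<ge> real (card T) - real k * (real (card VG) - \<delta>)"
  using assms(3)
proof (induction k)
  case 0 then show ?case by simp
next
  case (Suc k)
  have fin: "finite VG" using assms(1) by (simp add: graph_def)
  define A where "A = {w\<in>T. \<forall>j\<in>{1..k}. EG (v j) w}"
  define N where "N = {w\<in>VG. EG (v (Suc k)) w}"
  have IH: "real (card A) \<ge> real (card T) - real k * (real (card VG) - \<delta>)"
    using Suc A_def by auto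
  have eq: "{w\<in>T. \<forall>j\<in>{1..Suc k}. EG (v j) w} = A \<inter> N"
  proof -
    have "Suc k \<in> {1..Suc k}" by simp
    then show ?thesis using assms(2) by (auto simp: A_def N_def le_Suc_eq)
  qed
  have finA: "finite A" using fin assms(2) A_def by (auto intro: finite_subset)
  have "card A = card (A \<inter> N) + card (A - N)"
    using finA by (metis Diff_Diff_Int card_Diff_subset_Int Int_lower1 add.commute card_Diff_subset finite_Int card_mono le_add_diff_inverse)
  moreover have "card (A - N) \<le> card (VG - N)"
    using fin assms(2) by (intro card_mono) (auto simp: A_def N_def)
  moreover have "card (VG - N) = card VG - card N"
    using fin by (intro card_Diff_subset) (auto simp: N_def intro: finite_subset)
  moreover have "card N \<le> card VG" using fin by (intro card_mono) (auto simp: N_def)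
  moreover have "\<delta> \<le> real (card N)" using Suc.prems by (auto simp: N_def degree_def)
  ultimately have "real (card (A \<inter> N)) \<ge> real (card A) - (real (card VG) - \<delta>)"
    by (simp add: of_nat_diff)
  then show ?case using IH eq by (simp add: algebra_simps)
qed


lemma greedy:
  fixes c :: "'a \<Rightarrow> real" and m :: nat
  assumes "finite S"
    and ne: "\<forall>v k. k \<in> {1..m} \<longrightarrow> (\<forall>j\<in>{1..<k}. v j \<in> S) \<longrightarrow> {w\<in>S. \<forall>j\<in>{1..<k}. E (v j) w} \<noteq> {}"
  shows "\<exists>v. \<forall>k\<in>{1..m}. v k \<in> S \<and> (\<forall>j\<in>{1..<k}. E (v j) (v k)) \<and>
            (\<forall>w\<in>S. (\<forall>j\<in>{1..<k}. E (v j) w) \<longrightarrow> c (v k) \<le> c w)"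
  using ne
proof (induction m)
  case 0 then show ?case by simp
next
  case (Suc m)
  have "\<forall>v k. k \<in> {1..m} \<longrightarrow> (\<forall>j\<in>{1..<k}. v j \<in> S) \<longrightarrow> {w\<in>S. \<forall>j\<in>{1..<k}. E (v j) w} \<noteq> {}"
    using Suc.prems by simp
  then obtain v where v: "\<forall>k\<in>{1..m}. v k \<in> S \<and> (\<forall>j\<in>{1..<k}. E (v j) (v k)) \<and>
            (\<forall>w\<in>S. (\<forall>j\<in>{1..<k}. E (v j) w) \<longrightarrow> c (v k) \<le> c w)"
    using Suc.IH by blast
  define A where "A = {w\<in>S. \<forall>j\<in>{1..<Suc m}. E (v j) w}"
  have "\<forall>j\<in>{1..<Suc m}. v j \<in> S" using v by simp
  then have "A \<noteq> {}" unfolding A_def using Suc.prems by simp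
  moreover have "finite A" using assms(1) A_def by auto
  ultimately have "Min (c ` A) \<in> c ` A" by (intro Min_in) auto
  then obtain w where w1: "w \<in> A" "c w = Min (c ` A)" by auto
  have "\<forall>w'\<in>A. c w \<le> c w'" using w1(2) \<open>finite A\<close> by (auto intro: Min_le)
  note w = w1(1) this
  show ?case
  proof (intro exI[of _ "v(Suc m := w)"] ballI)
    fix k assume k: "k \<in> {1..Suc m}"
    show "(v(Suc m := w)) k \<in> S \<and> (\<forall>j\<in>{1..<k}. E ((v(Suc m := w)) j) ((v(Suc m := w)) k)) \<and>
            (\<forall>w'\<in>S. (\<forall>j\<in>{1..<k}. E ((v(Suc m := w)) j) w') \<longrightarrow> c ((v(Suc m := w)) k) \<le> c w')"
    proof (cases "k = Suc m")
      case True then show ?thesis using w by (simp add: A_def)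
    next
      case False then have "k \<in> {1..m}" using k by auto
      then show ?thesis using v by simp
    qed
  qed
qed

lemma key_ineq:
  fixes x h P L lr lk R K :: real
  assumes "0 < x" "x*h < 1" "h = P + L" "P \<ge> (K-1)*lk" "L \<le> (R-K)*lk + lr" "1 \<le> K" "K \<le> R-1" "0 \<le> lk" "0 \<le> lr"
  shows "R - 2 + x*h - (K-1)*(1-x*lr) \<ge> (R-1)*x*L"
proof -
  have Q: "(R-K)*P + (K-1)*lr - (K-1)*L \<ge> 0"
  proof -
    have a: "(R-K)*P \<ge> (R-K)*((K-1)*lk)" by (rule mult_left_mono) (use assms in auto)
    have b: "(K-1)*L \<le> (K-1)*((R-K)*lk + lr)" by (rule mult_left_mono) (use assms in auto)
    have c: "(K-1)*((R-K)*lk + lr) = (R-K)*((K-1)*lk) + (K-1)*lr" by (simp add: algebra_simps)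
    show ?thesis using a b c by linarith
  qed
  have e: "R - 2 + x*h - (K-1)*(1-x*lr) - (R-1)*x*L = (1-x*h)*(R-1-K) + x*((R-K)*P + (K-1)*lr - (K-1)*L)"
    using assms(3) by (simp add: algebra_simps)
  moreover have "(1-x*h)*(R-1-K) \<ge> 0" using assms by auto
  moreover have "x*((R-K)*P + (K-1)*lr - (K-1)*L) \<ge> 0" using Q assms by auto
  ultimately show ?thesis by linarith
qed


lemma aux_div: "(a::real)*n/q - b*(c*n/q) = (n/q)*(a - b*c)"
  by (simp add: divide_inverse algebra_simps)

theorem proposition2p8:
  fixes VH :: "'b set" and EH :: "'b \<Rightarrow> 'b \<Rightarrow> bool"
    and VG :: "'a set" and EG :: "'a \<Rightarrow> 'a \<Rightarrow> bool"
    and r n :: nat and col :: "'b \<Rightarrow> nat" and ell :: "nat \<Rightarrow> nat" and x \<delta> :: real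
  assumes "r \<ge> 2"
    and "graph VH EH"
    and "\<forall>u\<in>VH. col u \<in> {1..r}"
    and "\<forall>u\<in>VH. \<forall>v\<in>VH. EH u v \<longrightarrow> col u \<noteq> col v"
    and "\<forall>i\<in>{1..r}. ell i = card {u \<in> VH. col u = i}"
    and "\<forall>i\<in>{1..r}. \<forall>j\<in>{1..r}. i \<le> j \<longrightarrow> ell j \<le> ell i"
    and "ell r > 0"
    and "0 < x" and "x < 1 / real (card VH)"
    and "n > 0"
    and "\<delta> = (real r - 2 + x * real (ell r)) * real n / (real r - 1)"
    and "graph VG EG" and "card VG = n"
    and "real (card {v \<in> VG. real (degree VG EG v) \<ge> \<delta>})
           \<ge> (real r - 2 + x * real (card VH)) * real n / (real r - 1)"
  shows "frac_hom_cover_number VH EH VG EG \<ge> x * real n"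
proof -
  note r2 = assms(1) and gH = assms(2) and colr = assms(3) and colp = assms(4)
    and ellc = assms(5) and ellmono = assms(6) and ellr = assms(7) and x0 = assms(8)
    and x1 = assms(9) and n0 = assms(10) and dd = assms(11) and gG = assms(12)
    and cardG = assms(13) and Sbig = assms(14)
  have finG: "finite VG" using gG by (simp add: graph_def)
  have finH: "finite VH" using gH by (simp add: graph_def)
  define S where "S = {v\<in>VG. real (degree VG EG v) \<ge> \<delta>}"
  define D where "D = real n - \<delta>"
  have R1: "real r - 1 > 0" "real r - 1 \<noteq> 0" using r2 by simp_all
  have Dform: "D = (1 - x * real (ell r)) * real n / (real r - 1)"
    unfolding D_def dd using R1 by (simp add: field_simps)
  define L where "L k = (\<Sum>j=k..r. real (ell j))" for k
  have hsum_nat: "card VH = (\<Sum>k=1..r. card {u\<in>VH. col u = k})"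
  proof -
    have "col ` VH \<subseteq> {1..r}" using colr by auto
    from sum.group[OF finH finite_atLeastAtMost[of 1 r] this, of "\<lambda>_. 1::nat"] show ?thesis by simp
  qed
  have hsum: "real (card VH) = (\<Sum>j=1..r. real (ell j))"
    unfolding hsum_nat of_nat_sum using ellc by (intro sum.cong) auto
  have VHne: "VH \<noteq> {}" using ellr ellc r2 by (metis (no_types, lifting) atLeastAtMost_iff card.empty empty_Collect_eq empty_iff le_refl less_irrefl one_le_numeral le_trans)
  have cVH: "real (card VH) > 0" using VHne finH by (simp add: card_gt_0_iff)
  have xh: "x * real (card VH) < 1" using x1 cVH by (simp add: less_divide_eq)
  have Lpos: "L k > 0" if "k \<in> {1..r}" for k
  proof -
    have "real (ell r) \<le> L k" unfolding L_def using that
      by (intro member_le_sum) auto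
    then show ?thesis using ellr by simp
  qed
  have Sbound: "real (card S) - real (k-1) * D \<ge> x * real n * L k" if k: "k \<in> {1..<r}" for k
  proof -
    define P where "P = (\<Sum>j=1..<k. real (ell j))"
    have split: "{1..r} = {1..<k} \<union> {k..r}" using k by auto
    have hP: "real (card VH) = P + L k"
      unfolding hsum P_def L_def split by (rule sum.union_disjoint) auto
    have Pge: "P \<ge> real (k-1) * real (ell k)"
    proof -
      have "(\<Sum>j=1..<k. real (ell k)) \<le> P" unfolding P_def
        using ellmono k by (intro sum_mono) auto
      then show ?thesis by simp
    qed
    have Lle: "L k \<le> real (r-k) * real (ell k) + real (ell r)"
    proof -
      have "{k..r} = {k..<r} \<union> {r}" using k by auto
      then have "L k = (\<Sum>j=k..<r. real (ell j)) + real (ell r)" unfolding L_def by simp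
      moreover have "(\<Sum>j=k..<r. real (ell j)) \<le> (\<Sum>j=k..<r. real (ell k))"
        using ellmono k by (intro sum_mono) auto
      ultimately show ?thesis by simp
    qed
    have ki: "real (k-1) = real k - 1" "real (r-k) = real r - real k" using k by auto
    have KI: "real r - 2 + x*real (card VH) - (real k-1)*(1-x*real (ell r)) \<ge> (real r-1)*x*L k"
      by (rule key_ineq[OF x0 xh hP, of "real k" "real (ell k)" "real r" "real (ell r)"])
        (use Pge Lle k ki in auto)
    have "x * real n * L k = (real n / (real r - 1)) * ((real r-1)*x*L k)"
      using R1 by simp
    also have "\<dots> \<le> (real n / (real r - 1)) * (real r - 2 + x*real (card VH) - (real k-1)*(1-x*real (ell r)))"
      by (rule mult_left_mono[OF KI]) (use R1 in simp)
    also have "\<dots> = (real r - 2 + x * real (card VH)) * real n / (real r - 1) - (real k - 1) * ((1 - x * real (ell r)) * real n / (real r - 1))"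
      by (rule aux_div[symmetric])
    also have "\<dots> \<le> real (card S) - real (k-1) * D"
      using Sbig unfolding S_def Dform ki by simp
    finally show ?thesis by simp
  qed
  have Acard: "real (card {w\<in>S. \<forall>j\<in>{1..<k}. EG (v j) w}) \<ge> x * real n * L k"
    if k: "k \<in> {1..<r}" and vS: "\<forall>j\<in>{1..<k}. v j \<in> S" for k v
  proof -
    have e: "{1..<k} = {1..k-1}" using k by auto
    have "real (card {w\<in>S. \<forall>j\<in>{1..k-1}. EG (v j) w}) \<ge> real (card S) - real (k-1) * (real (card VG) - \<delta>)"
      by (rule card_common_nbrs[OF gG]) (use vS e in \<open>auto simp: S_def\<close>)
    then show ?thesis using Sbound[OF k] e cardG by (simp add: D_def)
  qed
  have Ar: "real (card {w\<in>VG. \<forall>j\<in>{1..<r}. EG (v j) w}) \<ge> x * real n * real (ell r)"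
    if vS: "\<forall>j\<in>{1..<r}. v j \<in> S" for v
  proof -
    have e: "{1..<r} = {1..r-1}" using r2 by auto
    have "real (card {w\<in>VG. \<forall>j\<in>{1..r-1}. EG (v j) w}) \<ge> real (card VG) - real (r-1) * (real (card VG) - \<delta>)"
      by (rule card_common_nbrs[OF gG]) (use vS e in \<open>auto simp: S_def\<close>)
    moreover have "real (card VG) - real (r-1) * (real (card VG) - \<delta>) = x * real n * real (ell r)"
      using cardG R1 r2 Dform by (simp add: D_def of_nat_diff field_simps)
    ultimately show ?thesis using e by simp
  qed

  have homsVG: "h ` VH \<subseteq> VG" if "h \<in> homs VH EH VG EG" for h
    using that by (auto simp: homs_def PiE_def Pi_def)
  have ne: "{(\<Sum>v\<in>VG. c v) | c. frac_hom_cover VH EH VG EG c} \<noteq> {}"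
  proof -
    have "frac_hom_cover VH EH VG EG (\<lambda>_. 1)"
      unfolding frac_hom_cover_def
    proof (intro conjI ballI)
      fix h assume h: "h \<in> homs VH EH VG EG"
      have "(\<Sum>v\<in>VG. 1 * real (card {u \<in> VH. h u = v})) = (\<Sum>u\<in>VH. (1::real))"
        by (rule fiber_sum[OF finG finH homsVG[OF h]])
      then show "1 \<le> (\<Sum>v\<in>VG. 1 * real (card {u \<in> VH. h u = v}))"
        using VHne finH by (simp add: Suc_leI card_gt_0_iff)
    qed auto
    then show ?thesis by blast
  qed
  have main: "x * real n \<le> (\<Sum>v\<in>VG. c v)" if cov: "frac_hom_cover VH EH VG EG c" for c
  proof -
    have c0: "\<forall>v\<in>VG. 0 \<le> c v" and hc: "\<forall>h\<in>homs VH EH VG EG. (\<Sum>v\<in>VG. c v * real (card {u \<in> VH. h u = v})) \<ge> 1"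
      using cov by (auto simp: frac_hom_cover_def)
    have finS: "finite S" using finG by (simp add: S_def)
    have nes: "\<forall>v k. k \<in> {1..r-1} \<longrightarrow> (\<forall>j\<in>{1..<k}. v j \<in> S) \<longrightarrow> {w\<in>S. \<forall>j\<in>{1..<k}. EG (v j) w} \<noteq> {}"
    proof (intro allI impI)
      fix v k assume k: "k \<in> {1..r-1}" and vS: "\<forall>j\<in>{1..<k}. v j \<in> S"
      have k': "k \<in> {1..<r}" using k r2 by auto
      have "0 < x * real n * L k" using x0 n0 Lpos[of k] k' by auto
      also have "\<dots> \<le> real (card {w\<in>S. \<forall>j\<in>{1..<k}. EG (v j) w})" by (rule Acard[OF k' vS])
      finally show "{w\<in>S. \<forall>j\<in>{1..<k}. EG (v j) w} \<noteq> {}"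
        by (metis card.empty of_nat_0 order_less_irrefl)
    qed
    obtain v where v: "\<forall>k\<in>{1..r-1}. v k \<in> S \<and> (\<forall>j\<in>{1..<k}. EG (v j) (v k)) \<and>
            (\<forall>w\<in>S. (\<forall>j\<in>{1..<k}. EG (v j) w) \<longrightarrow> c (v k) \<le> c w)"
      using greedy[OF finS nes, of c] by blast
    have vS: "\<forall>j\<in>{1..<r}. v j \<in> S" using v r2 by auto
    define Ar where "Ar = {w\<in>VG. \<forall>j\<in>{1..<r}. EG (v j) w}"
    have "0 < x * real n * real (ell r)" using x0 n0 ellr by auto
    also have "\<dots> \<le> real (card Ar)" unfolding Ar_def by (rule Ar[OF vS])
    finally have "Ar \<noteq> {}" by auto
    moreover have "finite Ar" using finG Ar_def by auto
    ultimately have "Min (c ` Ar) \<in> c ` Ar" by (intro Min_in) auto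
    then obtain vr where vr1: "vr \<in> Ar" "c vr = Min (c ` Ar)" by auto
    have vrmin: "\<forall>w\<in>Ar. c vr \<le> c w" using vr1(2) \<open>finite Ar\<close> by (auto intro: Min_le)
    define V where "V = v(r := vr)"
    have VG_in: "V k \<in> VG" if "k \<in> {1..r}" for k
      using that v vr1 by (cases "k = r") (auto simp: V_def S_def Ar_def)
    have adj1: "EG (V i) (V j)" if "i \<in> {1..r}" "j \<in> {1..r}" "i < j" for i j
    proof (cases "j = r")
      case True then show ?thesis using that vr1 by (auto simp: V_def Ar_def)
    next
      case False then have "j \<in> {1..r-1}" "i \<in> {1..<j}" using that by auto
      then show ?thesis using v that False by (auto simp: V_def)
    qed
    have adj: "EG (V i) (V j)" if "i \<in> {1..r}" "j \<in> {1..r}" "i \<noteq> j" for i j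
    proof (cases "i < j")
      case True then show ?thesis using adj1 that by auto
    next
      case False then have "EG (V j) (V i)" using adj1 that by auto
      then show ?thesis using gG by (auto simp: graph_def)
    qed
    define hm where "hm = (\<lambda>u. if u \<in> VH then V (col u) else undefined)"
    have hm: "hm \<in> homs VH EH VG EG"
      unfolding homs_def
    proof (intro CollectI conjI ballI impI)
      show "hm \<in> VH \<rightarrow>\<^sub>E VG" using VG_in colr by (auto simp: hm_def)
    next
      fix u w assume "u \<in> VH" "w \<in> VH" "EH u w"
      then show "EG (hm u) (hm w)" using adj colr colp by (auto simp: hm_def)
    qed
    have "1 \<le> (\<Sum>v\<in>VG. c v * real (card {u \<in> VH. hm u = v}))" using hc hm by blast
    also have "\<dots> = (\<Sum>u\<in>VH. c (hm u))" by (rule fiber_sum[OF finG finH homsVG[OF hm]])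
    also have "\<dots> = (\<Sum>u\<in>VH. c (V (col u)))" by (simp add: hm_def)
    also have "\<dots> = (\<Sum>k\<in>{1..r}. \<Sum>u\<in>{u\<in>VH. col u = k}. c (V (col u)))"
    proof -
      have "col ` VH \<subseteq> {1..r}" using colr by auto
      from sum.group[OF finH finite_atLeastAtMost[of 1 r] this, of "\<lambda>u. c (V (col u))"] show ?thesis by simp
    qed
    also have "\<dots> = (\<Sum>k\<in>{1..r}. real (ell k) * c (V k))"
      using ellc by (intro sum.cong) auto
    finally have cov1: "1 \<le> (\<Sum>k=1..r. real (ell k) * c (V k))" .
    define a where "a k = (if k = 0 then 0 else if k = r then max (c (V r)) (c (V (r-1))) else c (V k))" for k
    have a0: "a 0 = 0" by (simp add: a_def)
    have amono: "\<forall>k<r. a k \<le> a (Suc k)"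
    proof (intro allI impI)
      fix k assume k: "k < r"
      show "a k \<le> a (Suc k)"
      proof (cases "k = 0")
        case True
        have "1 \<in> {1..r}" using r2 by auto
        then show ?thesis using True c0 VG_in[of 1] r2 by (auto simp: a_def)
      next
        case False
        show ?thesis
        proof (cases "Suc k = r")
          case True then show ?thesis using False by (auto simp: a_def)
        next
          case False2: False
          have k1: "k \<in> {1..r-1}" "Suc k \<in> {1..r-1}" using k False False2 by auto
          then have "v (Suc k) \<in> S" "\<forall>j\<in>{1..<Suc k}. EG (v j) (v (Suc k))" using v by auto
          then have "c (v k) \<le> c (v (Suc k))" using v k1 by auto
          then show ?thesis using False False2 k by (auto simp: a_def V_def)
        qed
      qed
    qed
    have levels: "x * real n * L k \<le> real (card {w\<in>VG. a k \<le> c w})" if k: "k \<in> {1..r}" for k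
    proof -
      have lev_lt: "x * real n * L k \<le> real (card {w\<in>VG. c (v k) \<le> c w})" if k: "k \<in> {1..<r}" for k
      proof -
        have k1: "k \<in> {1..r-1}" using k by auto
        have vS': "\<forall>j\<in>{1..<k}. v j \<in> S" using v k by auto
        have "{w\<in>S. \<forall>j\<in>{1..<k}. EG (v j) w} \<subseteq> {w\<in>VG. c (v k) \<le> c w}"
          using v k1 by (auto simp: S_def)
        then have "card {w\<in>S. \<forall>j\<in>{1..<k}. EG (v j) w} \<le> card {w\<in>VG. c (v k) \<le> c w}"
          using finG by (intro card_mono) auto
        then show ?thesis using Acard[OF k vS'] by linarith
      qed
      show ?thesis
      proof (cases "k = r")
        case False
        then have "k \<in> {1..<r}" using k by auto
        then show ?thesis using lev_lt[of k] False by (auto simp: a_def V_def)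
      next
        case True
        show ?thesis
        proof (cases "c (V (r-1)) \<le> c (V r)")
          case True2: True
          have "Ar \<subseteq> {w\<in>VG. a k \<le> c w}" using vrmin True True2 r2 by (auto simp: a_def V_def Ar_def)
          then have "card Ar \<le> card {w\<in>VG. a k \<le> c w}" using finG by (intro card_mono) auto
          moreover have "L r = real (ell r)" by (simp add: L_def)
          ultimately show ?thesis using Ar[OF vS] True unfolding Ar_def by simp
        next
          case False2: False
          have r1: "r - 1 \<in> {1..<r}" using r2 by auto
          have "a k = c (v (r-1))" using True False2 r2 by (auto simp: a_def V_def)
          moreover have "L r \<le> L (r-1)"
            unfolding L_def using r2 by (intro sum_mono2) auto
          moreover have "x * real n \<ge> 0" using x0 by simp
          ultimately have "x * real n * L r \<le> x * real n * L (r-1)" by (intro mult_left_mono) auto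
          then show ?thesis using lev_lt[OF r1] True \<open>a k = c (v (r-1))\<close> by simp
        qed
      qed
    qed
    have "x * real n \<le> x * real n * (\<Sum>k=1..r. real (ell k) * c (V k))"
      using mult_left_mono[OF cov1, of "x * real n"] x0 by simp
    also have "\<dots> \<le> x * real n * (\<Sum>k=1..r. real (ell k) * a k)"
    proof -
      have "(\<Sum>k=1..r. real (ell k) * c (V k)) \<le> (\<Sum>k=1..r. real (ell k) * a k)"
      proof (intro sum_mono mult_left_mono)
        fix k assume "k \<in> {1..r}"
        then show "c (V k) \<le> a k" by (auto simp: a_def)
      qed auto
      then show ?thesis using x0 by (intro mult_left_mono) auto
    qed
    also have "(\<Sum>k=1..r. real (ell k) * a k) = (\<Sum>k=1..r. (a k - a (k-1)) * L k)"
      unfolding L_def by (rule abel[where a=a and m=r and l="\<lambda>j. real (ell j)", OF a0, symmetric])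
    also have "x * real n * \<dots> = (\<Sum>k=1..r. (a k - a (k-1)) * (x * real n * L k))"
      by (simp add: sum_distrib_left algebra_simps)
    also have "\<dots> \<le> (\<Sum>k=1..r. (a k - a (k-1)) * real (card {w\<in>VG. a k \<le> c w}))"
    proof (intro sum_mono mult_left_mono)
      fix k assume k: "k \<in> {1..r}"
      show "x * real n * L k \<le> real (card {w\<in>VG. a k \<le> c w})" by (rule levels[OF k])
      have "k - 1 < r" "Suc (k-1) = k" using k by auto
      then show "0 \<le> a k - a (k-1)" using amono by fastforce
    qed
    also have "\<dots> \<le> (\<Sum>w\<in>VG. c w)" by (rule layer_cake[OF finG c0 a0 amono])
    finally show ?thesis .
  qed
  show ?thesis
    unfolding frac_hom_cover_number_def
    by (rule cInf_greatest[OF ne]) (use main in blast)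
qed

end
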